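(* Let $I$ be a conditional indicator w.r.t. $\mathcal{H}$ whose domain $\mathbb{D}_I$ is $\mathcal{H}$-decomposable. If $I$ is sub-additive, then $1_HI(X)\le I(1_HX)$ for all $H\in\mathcal{H}$ and $X\in\mathbb{D}_I$. Moreover, if $I$ is additive, then $I$ is regular.
   Context: Let $(\Omega,\mathcal{F},\mathbb{P})$ be a probability space with $\mathcal{F}$ complete, and $\mathcal{H}\subseteq\mathcal{F}$ a complete sub-$\sigma$-algebra. $\overline{\mathbb{R}}=\mathbb{R}\cup\{\pm\infty\}$ with conventions $r\pm\infty=\pm\infty$, $\infty-\infty=0$, $\infty+\infty=\infty$, $0\times(\pm\infty)=0$; $\mathbb{L}^0(G,\mathcal{G})$ is the set of $\mathcal{G}$-measurable random variables a.s. valued in $G$. $\operatorname{ess\,sup}_{\mathcal{H}}(X)$ is the smallest $\mathcal{H}$-measurable random variable dominating $X$ a.s., $\operatorname{ess\,inf}_{\mathcal{H}}(X)=-\operatorname{ess\,sup}_{\mathcal{H}}(-X)$. A conditional indicator w.r.t. $\mathcal{H}$ is a map $I:\mathbb{D}_I\to\mathbb{L}^0(\overline{\mathbb{R}},\mathcal{H})$, $0\in\mathbb{D}_I\subseteq\mathbb{L}^0(\overline{\mathbb{R}},\mathcal{F})$, with $I(X)\in[\operatorname{ess\,inf}_{\mathcal{H}}(X),\operatorname{ess\,sup}_{\mathcal{H}}(X)]$ a.s. and $\mathbb{D}_I+\mathbb{L}^0(\overline{\mathbb{R}},\mathcal{H})\subseteq\mathbb{D}_I$. $\mathbb{D}_I$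 is $\mathcal{H}$-decomposable if $X1_H+Y1_{\Omega\setminus H}\in\mathbb{D}_I$ for $X,Y\in\mathbb{D}_I$, $H\in\mathcal{H}$. Sub-additive: $I(X+Y)\le I(X)+I(Y)$; additive: equality. $I$ is regular if $\mathbb{D}_I$ is $\mathcal{H}$-decomposable and for $X,Y\in\mathbb{D}_I$, $H\in\mathcal{H}$, $X1_H=Y1_H$ implies $I(X)1_H=I(Y)1_H$. *)

theory Defs
  imports "HOL-Probability.Probability"
begin

text \<open>Standing setting: M is the probability space (Omega, F, P), F complete;
  N is the sub-sigma-algebra H (same space, sets N \<subseteq> sets M), complete in the
  sense that it contains every P-null set of F.  Random variables are functions
  into ereal (extended reals; Isabelle's ereal has inf - inf = 0, inf + -inf = 0,
  0 * inf = 0, matching the paper's conventions).\<close>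

definition complete_subalg :: "'a measure \<Rightarrow> 'a measure \<Rightarrow> bool" where
  "complete_subalg M N \<longleftrightarrow> subalgebra M N \<and> (\<forall>A \<in> null_sets M. A \<in> sets N)"

definition is_cond_ess_sup :: "'a measure \<Rightarrow> 'a measure \<Rightarrow> ('a \<Rightarrow> ereal) \<Rightarrow> ('a \<Rightarrow> ereal) \<Rightarrow> bool" where
  "is_cond_ess_sup M N X S \<longleftrightarrow> S \<in> borel_measurable N \<and> (AE \<omega> in M. X \<omega> \<le> S \<omega>) \<and>
     (\<forall>S' \<in> borel_measurable N. (AE \<omega> in M. X \<omega> \<le> S' \<omega>) \<longrightarrow> (AE \<omega> in M. S \<omega> \<le> S' \<omega>))"

definition cond_ess_sup :: "'a measure \<Rightarrow> 'a measure \<Rightarrow> ('a \<Rightarrow> ereal) \<Rightarrow> ('a \<Rightarrow> ereal)" where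
  "cond_ess_sup M N X = (SOME S. is_cond_ess_sup M N X S)"

definition cond_ess_inf :: "'a measure \<Rightarrow> 'a measure \<Rightarrow> ('a \<Rightarrow> ereal) \<Rightarrow> ('a \<Rightarrow> ereal)" where
  "cond_ess_inf M N X = (\<lambda>\<omega>. - cond_ess_sup M N (\<lambda>\<omega>'. - X \<omega>') \<omega>)"

text \<open>Conditional indicator I with domain D.  Since L^0 consists of a.s.-classes,
  we require D to be closed under a.s. modification and I to respect a.s. equality.\<close>
definition cond_indicator ::
  "'a measure \<Rightarrow> 'a measure \<Rightarrow> ('a \<Rightarrow> ereal) set \<Rightarrow> (('a \<Rightarrow> ereal) \<Rightarrow> ('a \<Rightarrow> ereal)) \<Rightarrow> bool" where
  "cond_indicator M N D I \<longleftrightarrow>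
     D \<subseteq> borel_measurable M \<and> (\<lambda>\<omega>. 0) \<in> D \<and>
     (\<forall>X \<in> D. \<forall>Y \<in> borel_measurable M. (AE \<omega> in M. X \<omega> = Y \<omega>) \<longrightarrow> Y \<in> D) \<and>
     (\<forall>X \<in> D. \<forall>Y \<in> D. (AE \<omega> in M. X \<omega> = Y \<omega>) \<longrightarrow> (AE \<omega> in M. I X \<omega> = I Y \<omega>)) \<and>
     (\<forall>X \<in> D. I X \<in> borel_measurable N) \<and>
     (\<forall>X \<in> D. AE \<omega> in M. cond_ess_inf M N X \<omega> \<le> I X \<omega> \<and> I X \<omega> \<le> cond_ess_sup M N X \<omega>) \<and>
     (\<forall>X \<in> D. \<forall>Z \<in> borel_measurable N. (\<lambda>\<omega>. X \<omega> + Z \<omega>) \<in> D)"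

definition decomposable :: "'a measure \<Rightarrow> ('a \<Rightarrow> ereal) set \<Rightarrow> bool" where
  "decomposable N D \<longleftrightarrow>
     (\<forall>X \<in> D. \<forall>Y \<in> D. \<forall>A \<in> sets N.
        (\<lambda>\<omega>. X \<omega> * indicator A \<omega> + Y \<omega> * indicator (space N - A) \<omega>) \<in> D)"

definition sub_additive :: "'a measure \<Rightarrow> ('a \<Rightarrow> ereal) set \<Rightarrow> (('a \<Rightarrow> ereal) \<Rightarrow> ('a \<Rightarrow> ereal)) \<Rightarrow> bool" where
  "sub_additive M D I \<longleftrightarrow>
     (\<forall>X \<in> D. \<forall>Y \<in> D. (\<lambda>\<omega>. X \<omega> + Y \<omega>) \<in> D \<longrightarrow>
        (AE \<omega> in M. I (\<lambda>\<omega>'. X \<omega>' + Y \<omega>') \<omega> \<le> I X \<omega> + I Y \<omega>))"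

definition additive :: "'a measure \<Rightarrow> ('a \<Rightarrow> ereal) set \<Rightarrow> (('a \<Rightarrow> ereal) \<Rightarrow> ('a \<Rightarrow> ereal)) \<Rightarrow> bool" where
  "additive M D I \<longleftrightarrow>
     (\<forall>X \<in> D. \<forall>Y \<in> D. (\<lambda>\<omega>. X \<omega> + Y \<omega>) \<in> D \<longrightarrow>
        (AE \<omega> in M. I (\<lambda>\<omega>'. X \<omega>' + Y \<omega>') \<omega> = I X \<omega> + I Y \<omega>))"

definition regular :: "'a measure \<Rightarrow> 'a measure \<Rightarrow> ('a \<Rightarrow> ereal) set \<Rightarrow> (('a \<Rightarrow> ereal) \<Rightarrow> ('a \<Rightarrow> ereal)) \<Rightarrow> bool" where
  "regular M N D I \<longleftrightarrow> decomposable N D \<and>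
     (\<forall>X \<in> D. \<forall>Y \<in> D. \<forall>A \<in> sets N.
        (AE \<omega> in M. X \<omega> * indicator A \<omega> = Y \<omega> * indicator A \<omega>) \<longrightarrow>
        (AE \<omega> in M. I X \<omega> * indicator A \<omega> = I Y \<omega> * indicator A \<omega>))"

end

theory Submission imports Defs begin

definition fA :: "ereal \<Rightarrow> real" where
  "fA x = (case x of ereal r \<Rightarrow> arctan r | PInfty \<Rightarrow> pi/2 | MInfty \<Rightarrow> - (pi/2))"

lemma fA_less: "x < y \<Longrightarrow> fA x < fA y"
  using arctan_bounded by (cases x; cases y) (auto simp: fA_def arctan_less_iff)

lemma fA_le_iff: "fA x \<le> fA y \<longleftrightarrow> x \<le> y"
  by (metis fA_less linorder_not_le order_le_less)

lemma fA_inj: "fA x = fA y \<longleftrightarrow> x = y"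
  by (metis fA_le_iff order_antisym order_refl)

lemma fA_bound: "\<bar>fA x\<bar> \<le> pi/2"
  using arctan_bounded[of "real_of_ereal x"] by (cases x) (auto simp: fA_def abs_le_iff less_imp_le)

lemma fA_lb: "- (pi/2) \<le> fA x"
  using fA_bound[of x] by linarith

lemma fA_meas: "S \<in> borel_measurable M \<Longrightarrow> (\<lambda>x. fA (S x)) \<in> borel_measurable M"
  by (rule borel_measurable_ereal_cases) (auto simp: fA_def)

lemma cond_ess_sup_exists:
  assumes ps: "prob_space M" and sub: "subalgebra M N" and X: "X \<in> borel_measurable M"
  shows "\<exists>S. is_cond_ess_sup M N X S"
proof -
  interpret prob_space M by fact
  define SS where "SS = {S \<in> borel_measurable N. AE \<omega> in M. X \<omega> \<le> S \<omega>}"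
  define \<Phi> where "\<Phi> S = integral\<^sup>L M (\<lambda>\<omega>. fA (S \<omega>))" for S :: "'a \<Rightarrow> ereal"
  have measM: "S \<in> borel_measurable M" if "S \<in> borel_measurable N" for S :: "'a \<Rightarrow> ereal"
    using measurable_from_subalg[OF sub that] .
  have intg: "integrable M (\<lambda>\<omega>. fA (S \<omega>))" if "S \<in> borel_measurable N" for S
    using fA_bound by (intro integrable_const_bound[where B="pi/2"] AE_I2) (auto intro!: fA_meas measM that)
  have lb: "- (pi/2) \<le> \<Phi> S" if "S \<in> borel_measurable N" for S
  proof -
    have "integral\<^sup>L M (\<lambda>\<omega>. - (pi/2)) \<le> \<Phi> S"
      unfolding \<Phi>_def
      using fA_lb by (intro integral_mono intg that) auto
    then show ?thesis by (simp add: prob_space)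
  qed
  have top: "(\<lambda>_. \<infinity>) \<in> SS" unfolding SS_def by auto
  define c where "c = Inf (\<Phi> ` SS)"
  have bdd: "bdd_below (\<Phi> ` SS)" using lb unfolding SS_def bdd_below_def by blast
  have "\<exists>S\<in>SS. \<Phi> S < c + 1 / Suc n" for n :: nat
  proof -
    have "Inf (\<Phi> ` SS) < c + 1 / Suc n" unfolding c_def by simp
    then obtain v where "v \<in> \<Phi> ` SS" "v < c + 1 / Suc n"
      using cInf_lessD[of "\<Phi> ` SS"] top by blast
    then show ?thesis by blast
  qed
  then obtain Sn where Sn: "\<And>n. Sn n \<in> SS" "\<And>n. \<Phi> (Sn n) < c + 1 / Suc n" by metis
  define S where "S \<omega> = (INF n. Sn n \<omega>)" for \<omega>
  have SnN: "Sn n \<in> borel_measurable N" for n using Sn unfolding SS_def by auto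
  have SN: "S \<in> borel_measurable N" unfolding S_def using SnN by measurable
  have "AE \<omega> in M. \<forall>n. X \<omega> \<le> Sn n \<omega>"
    using Sn(1) unfolding SS_def by (simp add: AE_all_countable)
  then have SX: "AE \<omega> in M. X \<omega> \<le> S \<omega>"
    by eventually_elim (auto simp: S_def intro: INF_greatest)
  have SS_S: "S \<in> SS" using SN SX unfolding SS_def by auto
  have PSn: "\<Phi> S \<le> c + 1 / Suc n" for n
  proof -
    have "\<Phi> S \<le> \<Phi> (Sn n)" unfolding \<Phi>_def
      by (intro integral_mono intg SN SnN) (auto simp: fA_le_iff S_def intro: INF_lower)
    then show ?thesis using Sn(2)[of n] by simp
  qed
  have "\<Phi> S \<le> c"
  proof (rule ccontr)
    assume "\<not> \<Phi> S \<le> c"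
    then have "0 < \<Phi> S - c" by simp
    then obtain n :: nat where "1 / real (Suc n) < \<Phi> S - c" by (rule nat_approx_posE)
    with PSn[of n] show False by simp
  qed
  moreover have "c \<le> \<Phi> S" unfolding c_def using bdd SS_S by (intro cInf_lower) auto
  ultimately have PS: "\<Phi> S = c" by simp
  have "AE \<omega> in M. S \<omega> \<le> S' \<omega>" if S'N: "S' \<in> borel_measurable N" and S'X: "AE \<omega> in M. X \<omega> \<le> S' \<omega>" for S'
  proof -
    define R where "R \<omega> = min (S \<omega>) (S' \<omega>)" for \<omega>
    have RN: "R \<in> borel_measurable N" unfolding R_def using SN S'N by measurable
    have "AE \<omega> in M. X \<omega> \<le> R \<omega>" using SX S'X by eventually_elim (auto simp: R_def)
    then have "R \<in> SS" using RN unfolding SS_def by auto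
    then have "c \<le> \<Phi> R" unfolding c_def using bdd by (intro cInf_lower) auto
    have "integral\<^sup>L M (\<lambda>\<omega>. fA (S \<omega>) - fA (R \<omega>)) = \<Phi> S - \<Phi> R"
      unfolding \<Phi>_def by (intro Bochner_Integration.integral_diff intg SN RN)
    also have "\<dots> \<le> 0" using PS \<open>c \<le> \<Phi> R\<close> by simp
    moreover have "0 \<le> integral\<^sup>L M (\<lambda>\<omega>. fA (S \<omega>) - fA (R \<omega>))"
      by (rule integral_nonneg_AE) (simp add: R_def fA_le_iff)
    ultimately have "integral\<^sup>L M (\<lambda>\<omega>. fA (S \<omega>) - fA (R \<omega>)) = 0"
      by linarith
    then have "AE \<omega> in M. fA (S \<omega>) - fA (R \<omega>) = 0"
      by (subst integral_nonneg_eq_0_iff_AE[symmetric])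
         (auto intro!: Bochner_Integration.integrable_diff intg SN RN[unfolded R_def] simp: R_def fA_le_iff)
    then show ?thesis by eventually_elim (auto simp: R_def fA_inj min_def split: if_splits)
  qed
  then have "is_cond_ess_sup M N X S" unfolding is_cond_ess_sup_def using SN SX by auto
  then show ?thesis by blast
qed

lemma cond_ess_sup_props:
  assumes "prob_space M" "subalgebra M N" "X \<in> borel_measurable M"
  shows "is_cond_ess_sup M N X (cond_ess_sup M N X)"
  unfolding cond_ess_sup_def using someI_ex[OF cond_ess_sup_exists[OF assms]] .

lemma ereal_neg_aux: "- (s::ereal) \<le> x \<Longrightarrow> s \<le> 0 \<Longrightarrow> 0 \<le> x"
  by (cases s; cases x) auto

lemma key_zero:
  assumes ps: "prob_space M" and sub: "subalgebra M N" and ci: "cond_indicator M N D I"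
    and Z: "Z \<in> D" and A: "A \<in> sets N" and Z0: "AE \<omega> in M. \<omega> \<in> A \<longrightarrow> Z \<omega> = 0"
  shows "AE \<omega> in M. \<omega> \<in> A \<longrightarrow> I Z \<omega> = 0"
proof -
  have ZM: "Z \<in> borel_measurable M" using ci Z unfolding cond_indicator_def by auto
  have ZM': "(\<lambda>\<omega>. - Z \<omega>) \<in> borel_measurable M" using ZM by measurable
  define T where "T \<omega> = (if \<omega> \<in> A then 0 else \<infinity> :: ereal)" for \<omega>
  have TN: "T \<in> borel_measurable N" unfolding T_def
    using A by (intro measurable_If_set) auto
  have "AE \<omega> in M. Z \<omega> \<le> T \<omega>" using Z0 by eventually_elim (auto simp: T_def)
  then have 1: "AE \<omega> in M. cond_ess_sup M N Z \<omega> \<le> T \<omega>"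
    using cond_ess_sup_props[OF ps sub ZM] TN unfolding is_cond_ess_sup_def by blast
  have "AE \<omega> in M. - Z \<omega> \<le> T \<omega>" using Z0 by eventually_elim (auto simp: T_def)
  then have 2: "AE \<omega> in M. cond_ess_sup M N (\<lambda>\<omega>. - Z \<omega>) \<omega> \<le> T \<omega>"
    using cond_ess_sup_props[OF ps sub ZM'] TN unfolding is_cond_ess_sup_def by blast
  have 3: "AE \<omega> in M. cond_ess_inf M N Z \<omega> \<le> I Z \<omega> \<and> I Z \<omega> \<le> cond_ess_sup M N Z \<omega>"
    using ci Z unfolding cond_indicator_def by auto
  from 1 2 3 show ?thesis
  proof eventually_elim
    case (elim \<omega>)
    show ?case
    proof
      assume "\<omega> \<in> A"
      then have a: "cond_ess_sup M N Z \<omega> \<le> 0" "cond_ess_sup M N (\<lambda>\<omega>. - Z \<omega>) \<omega> \<le> 0"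
        using elim by (auto simp: T_def)
      have "I Z \<omega> \<le> 0" using elim(3) a(1) by (meson order_trans)
      moreover have "0 \<le> I Z \<omega>"
        using elim(3) a(2) unfolding cond_ess_inf_def by (auto intro: ereal_neg_aux)
      ultimately show "I Z \<omega> = 0" by simp
    qed
  qed
qed

lemma decomp:
  assumes ps: "prob_space M" and sub: "subalgebra M N" and ci: "cond_indicator M N D I"
    and dec: "decomposable N D" and X: "X \<in> D" and A: "A \<in> sets N"
  shows "(\<lambda>\<omega>. indicator A \<omega> * X \<omega>) \<in> D" (is ?g1)
    and "(\<lambda>\<omega>. X \<omega> * indicator (space N - A) \<omega>) \<in> D" (is ?g2)
    and "(\<lambda>\<omega>. indicator A \<omega> * X \<omega> + X \<omega> * indicator (space N - A) \<omega>) \<in> D" (is ?g3)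
    and "AE \<omega> in M. I (\<lambda>\<omega>. indicator A \<omega> * X \<omega> + X \<omega> * indicator (space N - A) \<omega>) \<omega> = I X \<omega>" (is ?g4)
    and "AE \<omega> in M. \<omega> \<in> A \<longrightarrow> I (\<lambda>\<omega>. X \<omega> * indicator (space N - A) \<omega>) \<omega> = 0" (is ?g5)
    and "AE \<omega> in M. \<omega> \<notin> A \<longrightarrow> I (\<lambda>\<omega>. indicator A \<omega> * X \<omega>) \<omega> = 0" (is ?g6)
proof -
  have zero: "(\<lambda>_. 0) \<in> D" and DM: "D \<subseteq> borel_measurable M"
    and aeq: "\<forall>X \<in> D. \<forall>Y \<in> D. (AE \<omega> in M. X \<omega> = Y \<omega>) \<longrightarrow> (AE \<omega> in M. I X \<omega> = I Y \<omega>)"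
    using ci unfolding cond_indicator_def by auto
  have spN: "space N = space M" using sub unfolding subalgebra_def by auto
  have Asp: "A \<subseteq> space M" using sets.sets_into_space[OF A] spN by simp
  have d: "\<And>X Y. X \<in> D \<Longrightarrow> Y \<in> D \<Longrightarrow>
      (\<lambda>\<omega>. X \<omega> * indicator A \<omega> + Y \<omega> * indicator (space N - A) \<omega>) \<in> D"
    using dec A unfolding decomposable_def by blast
  have "(\<lambda>\<omega>. indicator A \<omega> * X \<omega>) = (\<lambda>\<omega>. X \<omega> * indicator A \<omega> + (\<lambda>_. 0) \<omega> * indicator (space N - A) \<omega>)"
    by (auto simp: mult.commute)
  then show g1: ?g1 using d[OF X zero] by simp
  have "(\<lambda>\<omega>. X \<omega> * indicator (space N - A) \<omega>) = (\<lambda>\<omega>. (\<lambda>_. 0) \<omega> * indicator A \<omega> + X \<omega> * indicator (space N - A) \<omega>)"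
    by auto
  then show g2: ?g2 using d[OF zero X] by simp
  have "(\<lambda>\<omega>. indicator A \<omega> * X \<omega> + X \<omega> * indicator (space N - A) \<omega>) = (\<lambda>\<omega>. X \<omega> * indicator A \<omega> + X \<omega> * indicator (space N - A) \<omega>)"
    by (auto simp: mult.commute)
  then show g3: ?g3 using d[OF X X] by simp
  have "AE \<omega> in M. indicator A \<omega> * X \<omega> + X \<omega> * indicator (space N - A) \<omega> = X \<omega>"
    using Asp spN by (intro AE_I2) (auto simp: indicator_def)
  then show ?g4 by (rule aeq[rule_format, OF g3 X])
  show ?g5 using g2 A by (intro key_zero[OF ps sub ci] AE_I2) (auto simp: indicator_def)
  have A': "space N - A \<in> sets N" using A by auto
  have "AE \<omega> in M. \<omega> \<in> space N - A \<longrightarrow> I (\<lambda>\<omega>. indicator A \<omega> * X \<omega>) \<omega> = 0"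
    using g1 A' by (intro key_zero[OF ps sub ci] AE_I2) (auto simp: indicator_def)
  with AE_space show ?g6 by eventually_elim (auto simp: spN)
qed

lemma p1: "(s::ereal) \<le> a + b \<Longrightarrow> s = x \<Longrightarrow> (w \<in> A \<longrightarrow> b = 0) \<Longrightarrow> (w \<notin> A \<longrightarrow> a = 0)
   \<Longrightarrow> indicator A w * x \<le> a"
  by (cases "w \<in> A") auto

lemma p2: "(s::ereal) = a + b \<Longrightarrow> s = x \<Longrightarrow> (w \<in> A \<longrightarrow> b = 0) \<Longrightarrow> (w \<in> A \<longrightarrow> x = a)"
  by auto

lemma p3: "(a::ereal) = a' \<Longrightarrow> (w \<in> A \<longrightarrow> x = a) \<Longrightarrow> (w \<in> A \<longrightarrow> y = a') \<Longrightarrow>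
   x * indicator A w = y * indicator A w"
  by (cases "w \<in> A") auto

theorem mainTheorem16:
  fixes M N :: "'a measure" and D :: "('a \<Rightarrow> ereal) set"
    and I :: "('a \<Rightarrow> ereal) \<Rightarrow> ('a \<Rightarrow> ereal)"
  assumes "prob_space M" and "complete_measure M" and "complete_subalg M N"
    and "cond_indicator M N D I" and "decomposable N D"
  shows "(sub_additive M D I \<longrightarrow>
           (\<forall>A \<in> sets N. \<forall>X \<in> D.
              AE \<omega> in M. indicator A \<omega> * I X \<omega> \<le> I (\<lambda>\<omega>'. indicator A \<omega>' * X \<omega>') \<omega>))
         \<and> (additive M D I \<longrightarrow> regular M N D I)"
proof (intro conjI impI)
  have ps: "prob_space M" by fact
  have sub: "subalgebra M N" using assms(3) unfolding complete_subalg_def by auto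
  have ci: "cond_indicator M N D I" by fact
  have dec: "decomposable N D" by fact
  have aeq: "\<forall>X \<in> D. \<forall>Y \<in> D. (AE \<omega> in M. X \<omega> = Y \<omega>) \<longrightarrow> (AE \<omega> in M. I X \<omega> = I Y \<omega>)"
    using ci unfolding cond_indicator_def by auto
  note dc = decomp[OF ps sub ci dec]
  {
    assume sa: "sub_additive M D I"
    show "\<forall>A \<in> sets N. \<forall>X \<in> D.
              AE \<omega> in M. indicator A \<omega> * I X \<omega> \<le> I (\<lambda>\<omega>'. indicator A \<omega>' * X \<omega>') \<omega>"
    proof (intro ballI)
      fix A X assume A: "A \<in> sets N" and X: "X \<in> D"
      have s: "AE \<omega> in M. I (\<lambda>\<omega>. indicator A \<omega> * X \<omega> + X \<omega> * indicator (space N - A) \<omega>) \<omega>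
          \<le> I (\<lambda>\<omega>. indicator A \<omega> * X \<omega>) \<omega> + I (\<lambda>\<omega>. X \<omega> * indicator (space N - A) \<omega>) \<omega>"
        by (rule sa[unfolded sub_additive_def, rule_format, OF dc(1)[OF X A] dc(2)[OF X A] dc(3)[OF X A]])
      from s dc(4,5,6)[OF X A] show "AE \<omega> in M. indicator A \<omega> * I X \<omega> \<le> I (\<lambda>\<omega>'. indicator A \<omega>' * X \<omega>') \<omega>"
        by eventually_elim (rule p1)
    qed
  }
  {
    assume ad: "additive M D I"
    have eqA: "AE \<omega> in M. \<omega> \<in> A \<longrightarrow> I X \<omega> = I (\<lambda>\<omega>. indicator A \<omega> * X \<omega>) \<omega>"
      if A: "A \<in> sets N" and X: "X \<in> D" for A X
    proof -
      have s: "AE \<omega> in M. I (\<lambda>\<omega>. indicator A \<omega> * X \<omega> + X \<omega> * indicator (space N - A) \<omega>) \<omega>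
          = I (\<lambda>\<omega>. indicator A \<omega> * X \<omega>) \<omega> + I (\<lambda>\<omega>. X \<omega> * indicator (space N - A) \<omega>) \<omega>"
        by (rule ad[unfolded additive_def, rule_format, OF dc(1)[OF X A] dc(2)[OF X A] dc(3)[OF X A]])
      from s dc(4,5)[OF X A] show ?thesis
        by eventually_elim (rule p2)
    qed
    show "regular M N D I" unfolding regular_def
    proof (intro conjI ballI impI)
      show "decomposable N D" by fact
      fix X Y A assume X: "X \<in> D" and Y: "Y \<in> D" and A: "A \<in> sets N"
        and h: "AE \<omega> in M. X \<omega> * indicator A \<omega> = Y \<omega> * indicator A \<omega>"
      have "AE \<omega> in M. indicator A \<omega> * X \<omega> = indicator A \<omega> * Y \<omega>"
        using h by eventually_elim (simp add: mult.commute)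
      then have e: "AE \<omega> in M. I (\<lambda>\<omega>. indicator A \<omega> * X \<omega>) \<omega> = I (\<lambda>\<omega>. indicator A \<omega> * Y \<omega>) \<omega>"
        by (rule aeq[rule_format, OF dc(1)[OF X A] dc(1)[OF Y A]])
      from e eqA[OF A X] eqA[OF A Y]
      show "AE \<omega> in M. I X \<omega> * indicator A \<omega> = I Y \<omega> * indicator A \<omega>"
        by eventually_elim (rule p3)
    qed
  }
qed

end
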